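(* Let $\mathcal{M}$ and $\mathcal{N}$ be matroids on the same finite ground set $V$, and let $k\ge1$ be an integer. If $r(\mathcal{M}[X])+r(\mathcal{N}[V\setminus X])\ge k+1$ for all $X\subseteq V$ for which $V\setminus X$ is a flat of $\mathcal{N}$ of rank at most $k-1$, then $\mathbf{RG}(\mathcal{M},\mathcal{N};k)$ is connected.
   Context: $\mathcal{M}[X]=\{A\in\mathcal{M}:A\subseteq X\}$ and $r$ is matroid rank. A flat of $\mathcal{N}$ is $F\subseteq V$ with $r(\mathcal{N}[F\cup\{x\}])>r(\mathcal{N}[F])$ for every $x\in V\setminus F$. $\mathbf{RG}(\mathcal{M},\mathcal{N};k)$ is the graph whose vertices are the common independent sets of $\mathcal{M}$ and $\mathcal{N}$ of cardinality $k$, two such sets $S,T$ being adjacent if $S\cup T$ is an independent set of $\mathcal{M}$ of cardinality $k+1$. *)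

theory Defs
  imports Main
begin

definition matroid :: "'a set \<Rightarrow> 'a set set \<Rightarrow> bool" where
  "matroid V M \<longleftrightarrow> finite V \<and> (\<forall>A\<in>M. A \<subseteq> V) \<and> {} \<in> M
     \<and> (\<forall>A\<in>M. \<forall>B. B \<subseteq> A \<longrightarrow> B \<in> M)
     \<and> (\<forall>A\<in>M. \<forall>B\<in>M. card A < card B \<longrightarrow> (\<exists>x\<in>B - A. insert x A \<in> M))"

definition restr :: "'a set set \<Rightarrow> 'a set \<Rightarrow> 'a set set" where
  "restr M X = {A \<in> M. A \<subseteq> X}"

definition mrank :: "'a set set \<Rightarrow> nat" where
  "mrank M = Max (card ` M)"

definition is_flat :: "'a set \<Rightarrow> 'a set set \<Rightarrow> 'a set \<Rightarrow> bool" where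
  "is_flat V N F \<longleftrightarrow> F \<subseteq> V \<and>
     (\<forall>x\<in>V - F. mrank (restr N (insert x F)) > mrank (restr N F))"

definition rg_vertices :: "'a set set \<Rightarrow> 'a set set \<Rightarrow> nat \<Rightarrow> 'a set set" where
  "rg_vertices M N k = {S. S \<in> M \<and> S \<in> N \<and> card S = k}"

definition rg_adj :: "'a set set \<Rightarrow> 'a set set \<Rightarrow> nat \<Rightarrow> 'a set \<Rightarrow> 'a set \<Rightarrow> bool" where
  "rg_adj M N k S T \<longleftrightarrow> S \<in> rg_vertices M N k \<and> T \<in> rg_vertices M N k
     \<and> S \<union> T \<in> M \<and> card (S \<union> T) = k + 1"

definition rg_connected :: "'a set set \<Rightarrow> 'a set set \<Rightarrow> nat \<Rightarrow> bool" where
  "rg_connected M N k \<longleftrightarrow>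
     (\<forall>S\<in>rg_vertices M N k. \<forall>T\<in>rg_vertices M N k. (rg_adj M N k)\<^sup>*\<^sup>* S T)"

end

theory Submission
  imports Defs
begin


lemma mat_fin: "matroid V M \<Longrightarrow> A \<in> M \<Longrightarrow> finite A"
  unfolding matroid_def by (meson finite_subset)
lemma mat_V: "matroid V M \<Longrightarrow> A \<in> M \<Longrightarrow> A \<subseteq> V"
  unfolding matroid_def by blast
lemma mat_sub: "matroid V M \<Longrightarrow> A \<in> M \<Longrightarrow> B \<subseteq> A \<Longrightarrow> B \<in> M"
  unfolding matroid_def by blast
lemma mat_aug: "matroid V M \<Longrightarrow> A \<in> M \<Longrightarrow> B \<in> M \<Longrightarrow> card A < card B \<Longrightarrow> \<exists>x\<in>B-A. insert x A \<in> M"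
  unfolding matroid_def by blast
lemma mat_empty: "matroid V M \<Longrightarrow> {} \<in> M"
  unfolding matroid_def by blast
lemma mat_finV: "matroid V M \<Longrightarrow> finite V"
  unfolding matroid_def by blast

lemma Aug_aux: "matroid V M \<Longrightarrow> B \<in> M \<Longrightarrow> card B - card A = n \<Longrightarrow> A \<in> M \<Longrightarrow> card A \<le> card B \<Longrightarrow>
   \<exists>C. A \<subseteq> C \<and> C \<subseteq> A \<union> B \<and> C \<in> M \<and> card C = card B"
proof (induction n arbitrary: A)
  case 0
  then have "card A = card B" by linarith
  then show ?case using 0 by blast
next
  case (Suc n)
  have m: "matroid V M" and b: "B \<in> M" and a: "A \<in> M" and cn: "card B - card A = Suc n" using Suc.prems by auto
  have lt: "card A < card B" using cn by linarith
  obtain x where x: "x \<in> B - A" "insert x A \<in> M" using mat_aug[OF m a b lt] by blast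
  have fA: "finite A" using mat_fin[OF m a] .
  have c: "card (insert x A) = card A + 1" using x fA by simp
  have c1: "card B - card (insert x A) = n" using c cn by linarith
  have c2: "card (insert x A) \<le> card B" using c lt by linarith
  obtain C where C: "insert x A \<subseteq> C" "C \<subseteq> insert x A \<union> B" "C \<in> M" "card C = card B"
    using Suc.IH[OF m b c1 x(2) c2] by blast
  have "A \<subseteq> C" using C(1) by blast
  moreover have "C \<subseteq> A \<union> B" using C(2) x(1) by blast
  ultimately show ?case using C(3,4) by blast
qed

lemma Aug: "matroid V M \<Longrightarrow> A \<in> M \<Longrightarrow> B \<in> M \<Longrightarrow> card A \<le> card B \<Longrightarrow>
   \<exists>C. A \<subseteq> C \<and> C \<subseteq> A \<union> B \<and> C \<in> M \<and> card C = card B"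
  by (rule Aug_aux[OF _ _ refl])

lemma exch_form: "finite B \<Longrightarrow> y \<notin> B \<Longrightarrow> y \<in> C \<Longrightarrow> C \<subseteq> insert y B \<Longrightarrow> card C = card B \<Longrightarrow>
   \<exists>x\<in>B. x \<notin> C \<and> C = insert y (B - {x})"
proof -
  assume a: "finite B" "y \<notin> B" "y \<in> C" "C \<subseteq> insert y B" "card C = card B"
  have ci: "card (insert y B) = Suc (card B)" using a(1,2) by simp
  have "C \<noteq> insert y B" using ci a(5) by (metis n_not_Suc_n)
  then obtain x where x: "x \<in> insert y B" "x \<notin> C" using a(4) by blast
  then have x: "x \<in> B" "x \<notin> C" using a(3) by auto
  have sub: "C \<subseteq> insert y (B - {x})" using a(4) x(2) by blast
  have f1: "finite (B - {x})" using a(1) by simp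
  have y1: "y \<notin> B - {x}" using a(2) by simp
  have "card (insert y (B - {x})) = Suc (card (B - {x}))" using card_insert_disjoint[OF f1 y1] .
  also have "card (B - {x}) = card B - 1" using card_Diff_singleton[OF x(1)] .
  also have "Suc (card B - 1) = card B" using card_gt_0_iff a(1) x(1) by (metis Suc_pred' empty_iff)
  finally have cc: "card (insert y (B - {x})) = card B" .
  have "C = insert y (B - {x})"
    by (rule card_subset_eq) (use sub cc a(5) f1 in auto)
  then show ?thesis using x by blast
qed

lemma Bound: "matroid V M \<Longrightarrow> B \<in> M \<Longrightarrow> (\<forall>y\<in>X - B. insert y B \<notin> M) \<Longrightarrow> A \<in> M \<Longrightarrow> A \<subseteq> X \<union> B \<Longrightarrow> card A \<le> card B"
proof (rule ccontr)
  assume m: "matroid V M" and b: "B \<in> M" and h: "\<forall>y\<in>X - B. insert y B \<notin> M" and a: "A \<in> M" "A \<subseteq> X \<union> B"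
    and "\<not> card A \<le> card B"
  then have "card B < card A" by simp
  then obtain y where "y \<in> A - B" "insert y B \<in> M" using mat_aug[OF m b a(1)] by blast
  then show False using h a by blast
qed

lemma mrank_le: "matroid V M \<Longrightarrow> (\<forall>A\<in>M. A \<subseteq> X \<longrightarrow> card A \<le> c) \<Longrightarrow> mrank (restr M X) \<le> c"
proof -
  assume m: "matroid V M" and h: "\<forall>A\<in>M. A \<subseteq> X \<longrightarrow> card A \<le> c"
  have "restr M X \<subseteq> Pow V" using m unfolding restr_def matroid_def by auto
  then have f: "finite (restr M X)" using m mat_finV by (metis finite_Pow_iff finite_subset)
  have ne: "{} \<in> restr M X" using m unfolding restr_def matroid_def by auto
  show ?thesis unfolding mrank_def using f ne h by (subst Max_le_iff) (auto simp: restr_def)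
qed

lemma mrank_ge: "matroid V M \<Longrightarrow> A \<in> M \<Longrightarrow> A \<subseteq> X \<Longrightarrow> card A \<le> mrank (restr M X)"
proof -
  assume m: "matroid V M" and a: "A \<in> M" "A \<subseteq> X"
  have "restr M X \<subseteq> Pow V" using m unfolding restr_def matroid_def by auto
  then have f: "finite (restr M X)" using m mat_finV by (metis finite_Pow_iff finite_subset)
  show ?thesis unfolding mrank_def using f a by (intro Max_ge) (auto simp: restr_def)
qed

lemma adj_sym: "rg_adj M N k S T \<Longrightarrow> rg_adj M N k T S"
  unfolding rg_adj_def by (auto simp: Un_commute)

lemma rt_sym: "(rg_adj M N k)\<^sup>*\<^sup>* S T \<Longrightarrow> (rg_adj M N k)\<^sup>*\<^sup>* T S"
proof (induction rule: rtranclp_induct)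
  case base then show ?case by simp
next
  case (step y z)
  then show ?case using adj_sym by (metis converse_rtranclp_into_rtranclp)
qed



lemma card_swap: "finite S \<Longrightarrow> x \<in> S \<Longrightarrow> y \<notin> S \<Longrightarrow> card (insert y (S - {x})) = card S"
proof -
  assume a: "finite S" "x \<in> S" "y \<notin> S"
  have "card (insert y (S - {x})) = Suc (card (S - {x}))" using a by simp
  also have "card (S - {x}) = card S - 1" using card_Diff_singleton[OF a(2)] .
  also have "Suc (card S - 1) = card S" using a card_gt_0_iff by (metis Suc_pred' empty_iff)
  finally show ?thesis .
qed

fun reach :: "'a set \<Rightarrow> 'a set set \<Rightarrow> 'a set set \<Rightarrow> 'a set \<Rightarrow> 'a set \<Rightarrow> 'a set \<Rightarrow> nat \<Rightarrow> 'a \<Rightarrow> bool" where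
  "reach V M N F J S 0 y = (y \<in> V \<and> y \<notin> S \<and> y \<notin> F)"
| "reach V M N F J S (Suc L) y = (reach V M N F J S L y \<or> (y \<in> V \<and> y \<notin> S \<and>
     (\<exists>x\<in>J. \<exists>y'. insert y (S - {x}) \<in> N \<and> insert y' (S - {x}) \<in> M \<and> reach V M N F J S L y')))"

lemma reach_out: "reach V M N F J S L y \<Longrightarrow> y \<in> V \<and> y \<notin> S"
  by (induction L arbitrary: y) auto

lemma reach_mono: "reach V M N F J S L y \<Longrightarrow> L \<le> L' \<Longrightarrow> reach V M N F J S L' y"
proof (induction L')
  case 0 then show ?case by simp
next
  case (Suc L')
  show ?case
  proof (cases "L = Suc L'")
    case True then show ?thesis using Suc.prems(1) by simp
  next
    case False then have "L \<le> L'" using Suc.prems(2) by simp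
    then have "reach V M N F J S L' y" using Suc.IH Suc.prems(1) by blast
    then show ?thesis unfolding reach.simps(2) by (rule disjI1)
  qed
qed

lemma vert_props: "S \<in> rg_vertices M N k \<Longrightarrow> S \<in> M \<and> S \<in> N \<and> card S = k"
  unfolding rg_vertices_def by auto

lemma adj_mk:
  assumes mM: "matroid V M" and Sv: "S \<in> rg_vertices M N k" and y: "y \<notin> S" "insert y S \<in> M"
    and x: "x \<in> S" and n: "insert y (S - {x}) \<in> N"
  shows "rg_adj M N k S (insert y (S - {x}))"
proof -
  have S: "S \<in> M" "S \<in> N" "card S = k" using Sv unfolding rg_vertices_def by auto
  have fS: "finite S" using mat_fin[OF mM S(1)] .
  have c1: "card (insert y (S - {x})) = k"
    using card_swap[OF fS x y(1)] S(3) by simp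
  have m1: "insert y (S - {x}) \<in> M" by (rule mat_sub[OF mM y(2)]) auto
  have u: "S \<union> insert y (S - {x}) = insert y S" using x by blast
  have c2: "card (insert y S) = k + 1" using fS y(1) S(3) by simp
  have v1: "insert y (S - {x}) \<in> rg_vertices M N k" unfolding rg_vertices_def using m1 n c1 by blast
  show ?thesis unfolding rg_adj_def using Sv v1 u y(2) c2 by simp
qed

lemma progress:
  assumes mM: "matroid V M" and mN: "matroid V N"
    and Sv: "S \<in> rg_vertices M N k" and Tv: "T \<in> rg_vertices M N k"
    and y: "y \<in> T - S" "insert y S \<in> M"
  shows "\<exists>S1. rg_adj M N k S S1 \<and> card (S1 - T) = card (S - T) - 1"
proof -
  have S: "S \<in> M" "S \<in> N" "card S = k" and T: "T \<in> M" "T \<in> N" "card T = k"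
    using Sv Tv unfolding rg_vertices_def by auto
  have fS: "finite S" using mat_fin[OF mM S(1)] .
  have fT: "finite T" using mat_fin[OF mM T(1)] .
  define A where "A = insert y (S \<inter> T)"
  have AT: "A \<subseteq> T" using y unfolding A_def by blast
  have AN: "A \<in> N" using mat_sub[OF mN T(2) AT] .
  have cA: "card A \<le> card S" using card_mono[OF fT AT] S(3) T(3) by simp
  obtain C where C: "A \<subseteq> C" "C \<subseteq> A \<union> S" "C \<in> N" "card C = card S"
    using Aug[OF mN AN S(2) cA] by blast
  have yS: "y \<notin> S" using y by blast
  have "y \<in> C" using C(1) unfolding A_def by blast
  moreover have "C \<subseteq> insert y S" using C(2) unfolding A_def by blast
  ultimately obtain x where x: "x \<in> S" "x \<notin> C" "C = insert y (S - {x})"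
    using exch_form[OF fS yS _ _ C(4)] by blast
  have xT: "x \<notin> T" using x(1,2) C(1) unfolding A_def by blast
  have adj: "rg_adj M N k S C" using adj_mk[OF mM Sv yS y(2) x(1)] C(3) x(3) by simp
  have "C - T = (S - T) - {x}" using x(3) y by blast
  then have "card (C - T) = card (S - T) - 1" using x(1) xT fS by simp
  then show ?thesis using adj by blast
qed

lemma stuck_M:
  assumes mM: "matroid V M" and Sv: "S \<in> rg_vertices M N k" and Tv: "T \<in> rg_vertices M N k"
    and st: "\<forall>w\<in>S - T. insert w T \<notin> M" and z: "insert z S \<in> M" "z \<notin> S" "z \<notin> T"
  shows "insert z T \<in> M"
proof -
  have S: "S \<in> M" "card S = k" and T: "T \<in> M" "card T = k"
    using Sv Tv unfolding rg_vertices_def by auto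
  have fS: "finite S" using mat_fin[OF mM S(1)] .
  have "card T < card (insert z S)" using fS z(2) S(2) T(2) by simp
  then obtain w where w: "w \<in> insert z S - T" "insert w T \<in> M" using mat_aug[OF mM T(1) z(1)] by blast
  then show ?thesis using st by blast
qed

lemma TriN:
  assumes mN: "matroid V N" and fA: "finite A" and ab: "a \<in> A" "b \<in> A" "a \<noteq> b"
    and uv: "u \<notin> A" "v \<notin> A" "u \<noteq> v"
    and h1: "insert u (A - {a}) \<in> N" and h2: "insert v (A - {b}) \<in> N" and h3: "insert u (A - {b}) \<notin> N"
  shows "insert v (insert u (A - {a, b})) \<in> N"
proof -
  define P where "P = A - {a, b}"
  have PuN: "insert u P \<in> N" by (rule mat_sub[OF mN h1]) (auto simp: P_def)
  have fP: "finite P" using fA unfolding P_def by simp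
  have B2: "insert v (A - {b}) = insert v (insert a P)" using ab unfolding P_def by blast
  have uP: "u \<notin> P" and aP: "a \<notin> P" and vP: "v \<notin> insert a P" using uv ab unfolding P_def by auto
  have c1: "card (insert u P) = card P + 1" using fP uP by simp
  have c2: "card (insert v (insert a P)) = card P + 2" using fP aP vP by simp
  have "card (insert u P) < card (insert v (A - {b}))" using c1 c2 B2 by simp
  then obtain w where w: "w \<in> insert v (A - {b}) - insert u P" "insert w (insert u P) \<in> N"
    using mat_aug[OF mN PuN h2] by blast
  have "w = a \<or> w = v" using w(1) unfolding P_def by blast
  moreover have "insert a (insert u P) = insert u (A - {b})" using ab unfolding P_def by blast
  ultimately have "w = v" using w(2) h3 by auto
  then show ?thesis using w(2) unfolding P_def by simp
qed

lemma TriM: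
  assumes mM: "matroid V M" and fS: "finite S" and x: "x \<in> S" and yy: "y' \<notin> S" "y0 \<notin> S" "y0 \<noteq> y'"
    and h1: "insert y' (S - {x}) \<in> M" and h2: "insert y' S \<notin> M" and h3: "insert y0 S \<in> M"
  shows "insert y0 (insert y' (S - {x})) \<in> M"
proof -
  have c1: "card (insert y' (S - {x})) = card S" using card_swap[OF fS x yy(1)] .
  have "card (insert y' (S - {x})) < card (insert y0 S)" using c1 fS yy by simp
  then obtain w where w: "w \<in> insert y0 S - insert y' (S - {x})" "insert w (insert y' (S - {x})) \<in> M"
    using mat_aug[OF mM h1 h3] by blast
  have "w = x \<or> w = y0" using w(1) by blast
  moreover have "insert x (insert y' (S - {x})) = insert y' S" using x by blast
  ultimately have "w = y0" using w(2) h2 by auto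
  then show ?thesis using w(2) by simp
qed



lemma adj_rt: "rg_adj M N k a b \<Longrightarrow> (rg_adj M N k)\<^sup>*\<^sup>* b c \<Longrightarrow> (rg_adj M N k)\<^sup>*\<^sup>* a c"
  by (rule converse_rtranclp_into_rtranclp[of "rg_adj M N k"])

lemma rt_step: "(rg_adj M N k) S S1 \<Longrightarrow> (rg_adj M N k) T T1 \<Longrightarrow> (rg_adj M N k)\<^sup>*\<^sup>* S1 T1 \<Longrightarrow> (rg_adj M N k)\<^sup>*\<^sup>* S T"
proof -
  assume a: "(rg_adj M N k) S S1" "(rg_adj M N k) T T1" "(rg_adj M N k)\<^sup>*\<^sup>* S1 T1"
  have b: "(rg_adj M N k) T1 T" using adj_sym[OF a(2)] .
  have "(rg_adj M N k)\<^sup>*\<^sup>* S1 T" using rtranclp.rtrancl_into_rtrancl[OF a(3) b] .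
  then show ?thesis by (rule adj_rt[OF a(1)])
qed

lemma nonstuck_conn:
  assumes mM: "matroid V M" and mN: "matroid V N"
    and IH: "\<forall>S T. S \<in> rg_vertices M N k \<longrightarrow> T \<in> rg_vertices M N k \<longrightarrow> card (S - T) = d' \<longrightarrow> (rg_adj M N k)\<^sup>*\<^sup>* S T"
    and Sv: "S \<in> rg_vertices M N k" and Tv: "T \<in> rg_vertices M N k" and cd: "card (S - T) = Suc d'"
    and ns: "(\<exists>y\<in>T - S. insert y S \<in> M) \<or> (\<exists>y\<in>S - T. insert y T \<in> M)"
  shows "(rg_adj M N k)\<^sup>*\<^sup>* S T"
proof -
  have S: "S \<in> M" "card S = k" and T: "T \<in> M" "card T = k" using Sv Tv unfolding rg_vertices_def by auto
  have fS: "finite S" using mat_fin[OF mM S(1)] .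
  have fT: "finite T" using mat_fin[OF mM T(1)] .
  have cdT: "card (T - S) = Suc d'"
  proof -
    have "card (S - T) = card S - card (S \<inter> T)" using fS by (metis card_Diff_subset_Int fT finite_Int)
    moreover have "card (T - S) = card T - card (T \<inter> S)" using fT by (metis card_Diff_subset_Int fS finite_Int)
    ultimately show ?thesis using cd S(2) T(2) by (simp add: Int_commute)
  qed
  show ?thesis using ns
  proof
    assume "\<exists>y\<in>T - S. insert y S \<in> M"
    then obtain y where "y \<in> T - S" "insert y S \<in> M" by blast
    then obtain S1 where S1: "rg_adj M N k S S1" "card (S1 - T) = card (S - T) - 1"
      using progress[OF mM mN Sv Tv] by blast
    have "S1 \<in> rg_vertices M N k" using S1(1) unfolding rg_adj_def by blast
    then have "(rg_adj M N k)\<^sup>*\<^sup>* S1 T" using IH Tv S1(2) cd by simp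
    then show ?thesis by (rule adj_rt[OF S1(1)])
  next
    assume "\<exists>y\<in>S - T. insert y T \<in> M"
    then obtain y where "y \<in> S - T" "insert y T \<in> M" by blast
    then obtain T1 where T1: "rg_adj M N k T T1" "card (T1 - S) = card (T - S) - 1"
      using progress[OF mM mN Tv Sv] by blast
    have "T1 \<in> rg_vertices M N k" using T1(1) unfolding rg_adj_def by blast
    then have "(rg_adj M N k)\<^sup>*\<^sup>* T1 S" using IH Sv T1(2) cdT by simp
    then have "(rg_adj M N k)\<^sup>*\<^sup>* T S" by (rule adj_rt[OF T1(1)])
    then show ?thesis by (rule rt_sym)
  qed
qed



lemma transfer:
  assumes mM: "matroid V M" and mN: "matroid V N" and fS: "finite S" and JS: "J \<subseteq> S" and x1: "x1 \<in> J"
    and y0: "y0 \<in> V" "y0 \<notin> S" "insert y0 S \<in> M" "insert y0 (S - {x1}) \<in> N"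
    and minimal: "\<forall>L' < L. \<forall>y. y \<in> V \<longrightarrow> y \<notin> S \<longrightarrow> insert y S \<in> M \<longrightarrow> \<not> reach V M N F J S L' y"
    and L: "L = Suc L1"
  shows "j \<le> L1 \<Longrightarrow> reach V M N F J S j y \<Longrightarrow> y \<noteq> y0 \<Longrightarrow>
         reach V M N F (insert y0 (J - {x1})) (insert y0 (S - {x1})) j y"
proof (induction j arbitrary: y)
  case 0
  then show ?case by auto
next
  case (Suc j)
  have jL: "j \<le> L1" using Suc.prems(1) by simp
  from Suc.prems(2) have "reach V M N F J S j y \<or> (y \<in> V \<and> y \<notin> S \<and>
     (\<exists>x\<in>J. \<exists>y'. insert y (S - {x}) \<in> N \<and> insert y' (S - {x}) \<in> M \<and> reach V M N F J S j y'))"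
    by simp
  then show ?case
  proof
    assume "reach V M N F J S j y"
    then have "reach V M N F (insert y0 (J - {x1})) (insert y0 (S - {x1})) j y" using Suc.IH jL Suc.prems(3) by blast
    then show ?case by simp
  next
    assume "y \<in> V \<and> y \<notin> S \<and>
     (\<exists>x\<in>J. \<exists>y'. insert y (S - {x}) \<in> N \<and> insert y' (S - {x}) \<in> M \<and> reach V M N F J S j y')"
    then obtain x y' where yy: "y \<in> V" "y \<notin> S" and x: "x \<in> J" and e: "insert y (S - {x}) \<in> N"
      "insert y' (S - {x}) \<in> M" "reach V M N F J S j y'" by blast
    have xS: "x \<in> S" using x JS by blast
    have x1S: "x1 \<in> S" using x1 JS by blast
    have ltS: "Suc j < L" using Suc.prems(1) L by simp
    have lt: "j < L" using Suc.prems(1) L by simp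
    have nr0: "\<not> reach V M N F J S (Suc j) y0" using minimal ltS y0 by blast
    have xx1: "x \<noteq> x1"
    proof
      assume "x = x1"
      then have "reach V M N F J S (Suc j) y0" using y0 x1 e(2,3) by auto
      then show False using nr0 by blast
    qed
    have y'o: "y' \<in> V" "y' \<notin> S" using reach_out[OF e(3)] by auto
    have y'y0: "y' \<noteq> y0" using e(3) minimal lt y0 by blast
    have y'M: "insert y' S \<notin> M" using e(3) minimal lt y'o by blast
    have h3: "insert y0 (S - {x}) \<notin> N"
    proof
      assume "insert y0 (S - {x}) \<in> N"
      then have "reach V M N F J S (Suc j) y0" using y0 x e(2,3) by auto
      then show False using nr0 by blast
    qed
    have tn: "insert y (insert y0 (S - {x1, x})) \<in> N"
      using TriN[OF mN fS x1S xS xx1[symmetric] y0(2) yy(2) Suc.prems(3)[symmetric] y0(4) e(1) h3] .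
    have eqN: "insert y (insert y0 (S - {x1}) - {x}) = insert y (insert y0 (S - {x1, x}))"
      using xS y0(2) by blast
    have tm: "insert y0 (insert y' (S - {x})) \<in> M"
      using TriM[OF mM fS xS y'o(2) y0(2) y'y0[symmetric] e(2) y'M y0(3)] .
    have mE: "insert y' (insert y0 (S - {x1}) - {x}) \<in> M"
      by (rule mat_sub[OF mM tm]) blast
    have r': "reach V M N F (insert y0 (J - {x1})) (insert y0 (S - {x1})) j y'"
      using Suc.IH[OF jL e(3) y'y0] .
    have xJ1: "x \<in> insert y0 (J - {x1})" using x xx1 by blast
    have yS1: "y \<notin> insert y0 (S - {x1})" using yy(2) Suc.prems(3) by blast
    have nE: "insert y (insert y0 (S - {x1}) - {x}) \<in> N" using tn eqN by simp
    show ?case unfolding reach.simps(2)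
      using yy(1) yS1 xJ1 nE mE r' by blast
  qed
qed

context
  fixes V :: "'a set" and M N :: "'a set set" and k d' :: nat and S0 T0 I Sp Tp F :: "'a set"
  assumes mM: "matroid V M" and mN: "matroid V N"
    and S0v: "S0 \<in> rg_vertices M N k" and T0v: "T0 \<in> rg_vertices M N k"
    and cd: "card (S0 - T0) = Suc d'"
    and I_def: "I = S0 \<inter> T0" and Sp_def: "Sp = S0 - T0" and Tp_def: "Tp = T0 - S0"
    and F_def: "F = {y \<in> V. y \<in> I \<or> insert y I \<notin> N}"
    and IH: "\<forall>S T. S \<in> rg_vertices M N k \<longrightarrow> T \<in> rg_vertices M N k \<longrightarrow> card (S - T) = d' \<longrightarrow> (rg_adj M N k)\<^sup>*\<^sup>* S T"
begin

lemma S0p: "S0 \<in> M" "S0 \<in> N" "card S0 = k" using S0v unfolding rg_vertices_def by auto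
lemma T0p: "T0 \<in> M" "T0 \<in> N" "card T0 = k" using T0v unfolding rg_vertices_def by auto
lemma fS0: "finite S0" using mat_fin[OF mM S0p(1)] .
lemma fT0: "finite T0" using mat_fin[OF mM T0p(1)] .
lemma fV: "finite V" using mat_finV[OF mM] .
lemma S0V: "S0 \<subseteq> V" using mat_V[OF mM S0p(1)] .
lemma T0V: "T0 \<subseteq> V" using mat_V[OF mM T0p(1)] .
lemma IN: "I \<in> N" by (rule mat_sub[OF mN S0p(2)]) (auto simp: I_def)
lemma fI: "finite I" using fS0 I_def by simp
lemma fSp: "finite Sp" using fS0 Sp_def by simp
lemma fTp: "finite Tp" using fT0 Tp_def by simp
lemma S0eq: "S0 = I \<union> Sp" using I_def Sp_def by blast
lemma T0eq: "T0 = I \<union> Tp" using I_def Tp_def by blast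
lemma disIS: "I \<inter> Sp = {}" using I_def Sp_def by blast
lemma disIT: "I \<inter> Tp = {}" using I_def Tp_def by blast
lemma disST: "Sp \<inter> Tp = {}" using Tp_def Sp_def by blast
lemma cSp: "card Sp = Suc d'" using cd Sp_def by simp
lemma cI: "card I + Suc d' = k"
  using S0p(3) S0eq disIS fI fSp cSp by (metis card_Un_disjoint)
lemma cTp: "card Tp = Suc d'"
proof -
  have "card T0 = card I + card Tp" using T0eq disIT fI fTp by (metis card_Un_disjoint)
  then show ?thesis using T0p(3) cI by simp
qed
lemma IF: "I \<subseteq> F" using F_def I_def S0V by blast
lemma FV: "F \<subseteq> V" using F_def by blast
lemma fF: "finite F" using FV fV finite_subset by blast

lemma SpF: "Sp \<inter> F = {}"
proof -
  { fix s assume s: "s \<in> Sp" "s \<in> F"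
    have "s \<notin> I" using s(1) disIS by blast
    moreover have "insert s I \<in> N" by (rule mat_sub[OF mN S0p(2)]) (use s(1) S0eq in blast)
    ultimately have False using s(2) F_def by blast }
  then show ?thesis by blast
qed

lemma TpF: "Tp \<inter> F = {}"
proof -
  { fix s assume s: "s \<in> Tp" "s \<in> F"
    have "s \<notin> I" using s(1) disIT by blast
    moreover have "insert s I \<in> N" by (rule mat_sub[OF mN T0p(2)]) (use s(1) T0eq in blast)
    ultimately have False using s(2) F_def by blast }
  then show ?thesis by blast
qed

lemma Lrank: "A \<in> N \<Longrightarrow> A \<subseteq> F \<Longrightarrow> card A \<le> card I"
proof -
  assume a: "A \<in> N" "A \<subseteq> F"
  have h: "\<forall>y\<in>F - I. insert y I \<notin> N" using F_def by blast
  show ?thesis by (rule Bound[OF mN IN h a(1)]) (use a(2) in blast)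
qed

lemma Lout: assumes J: "J \<subseteq> F" "J \<in> N" "card J = card I" and y: "y \<in> V" "y \<notin> F"
  shows "insert y J \<in> N"
proof (rule ccontr)
  assume nJ: "insert y J \<notin> N"
  have yI: "insert y I \<in> N" and yI2: "y \<notin> I" using y F_def by auto
  have "card J < card (insert y I)" using J(3) fI yI2 by simp
  then obtain w where w: "w \<in> insert y I - J" "insert w J \<in> N" using mat_aug[OF mN J(2) yI] by blast
  have "w \<noteq> y" using w(2) nJ by blast
  then have wI: "w \<in> I" "w \<notin> J" using w(1) by auto
  have "insert w J \<subseteq> F" using wI IF J(1) by blast
  then have "card (insert w J) \<le> card I" using Lrank w(2) by blast
  moreover have "finite J" using J(1) fF finite_subset by blast
  ultimately show False using wI(2) J(3) by simp
qed

lemma Lspan: assumes J: "J \<subseteq> F" "J \<in> N" "card J = card I" and P: "I \<union> P \<in> N" "P \<inter> F = {}" "finite P"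
  shows "J \<union> P \<in> N"
proof -
  have fJ: "finite J" using J(1) fF finite_subset by blast
  have dIP: "I \<inter> P = {}" using IF P(2) by blast
  have dJP: "J \<inter> P = {}" using J(1) P(2) by blast
  have cIP: "card (I \<union> P) = card I + card P" using card_Un_disjoint[OF fI P(3) dIP] .
  have cJP: "card (J \<union> P) = card J + card P" using card_Un_disjoint[OF fJ P(3) dJP] .
  have "card J \<le> card (I \<union> P)" using cIP J(3) by simp
  then obtain C where C: "J \<subseteq> C" "C \<subseteq> J \<union> (I \<union> P)" "C \<in> N" "card C = card (I \<union> P)"
    using Aug[OF mN J(2) P(1)] by blast
  have sub: "C \<subseteq> J \<union> P"
  proof
    fix c assume c: "c \<in> C"
    show "c \<in> J \<union> P"
    proof (rule ccontr)
      assume "c \<notin> J \<union> P"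
      then have cI: "c \<in> I" "c \<notin> J" using c C(2) by auto
      have "insert c J \<in> N" by (rule mat_sub[OF mN C(3)]) (use c C(1) in blast)
      moreover have "insert c J \<subseteq> F" using cI IF J(1) by blast
      ultimately have "card (insert c J) \<le> card I" using Lrank by blast
      then show False using cI(2) fJ J(3) by simp
    qed
  qed
  have "C = J \<union> P" by (rule card_subset_eq) (use sub fJ P(3) C(4) cIP cJP J(3) in auto)
  then show ?thesis using C(3) by simp
qed

lemma good_vert: assumes J: "J \<subseteq> F" "J \<in> N" "card J = card I" "J \<union> Sp \<in> M" "J \<union> Tp \<in> M"
  shows "J \<union> Sp \<in> rg_vertices M N k" "J \<union> Tp \<in> rg_vertices M N k"
    "(J \<union> Sp) - (J \<union> Tp) = Sp" "(J \<union> Tp) - (J \<union> Sp) = Tp"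
proof -
  have fJ: "finite J" using J(1) fF finite_subset by blast
  have n1: "J \<union> Sp \<in> N" using Lspan[OF J(1,2,3)] S0eq S0p(2) SpF fSp by simp
  have n2: "J \<union> Tp \<in> N" using Lspan[OF J(1,2,3)] T0eq T0p(2) TpF fTp by simp
  have c1: "card (J \<union> Sp) = k" using card_Un_disjoint[OF fJ fSp] J(1) SpF J(3) cSp cI by auto
  have c2: "card (J \<union> Tp) = k" using card_Un_disjoint[OF fJ fTp] J(1) TpF J(3) cTp cI by auto
  show "J \<union> Sp \<in> rg_vertices M N k" unfolding rg_vertices_def using J(4) n1 c1 by blast
  show "J \<union> Tp \<in> rg_vertices M N k" unfolding rg_vertices_def using J(5) n2 c2 by blast
  show "(J \<union> Sp) - (J \<union> Tp) = Sp" using J(1) SpF disST by blast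
  show "(J \<union> Tp) - (J \<union> Sp) = Tp" using J(1) TpF disST by blast
qed

lemma sink_conn: assumes J: "J \<subseteq> F" "J \<in> N" "card J = card I" "J \<union> Sp \<in> M" "J \<union> Tp \<in> M"
  and st1: "\<forall>y\<in>Tp. insert y (J \<union> Sp) \<notin> M" and st2: "\<forall>y\<in>Sp. insert y (J \<union> Tp) \<notin> M"
  and y0: "y0 \<in> V" "y0 \<notin> J \<union> Sp" "y0 \<notin> F" "insert y0 (J \<union> Sp) \<in> M"
  shows "(rg_adj M N k)\<^sup>*\<^sup>* (J \<union> Sp) (J \<union> Tp)"
proof -
  define S where "S = J \<union> Sp"
  define T where "T = J \<union> Tp"
  have Sv: "S \<in> rg_vertices M N k" and Tv: "T \<in> rg_vertices M N k" and SmT: "S - T = Sp" and TmS: "T - S = Tp"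
    using good_vert[OF J] unfolding S_def T_def by auto
  have Sp': "S \<in> N" "card S = k" "S \<in> M" and Tp': "T \<in> N" "card T = k" "T \<in> M" using Sv Tv unfolding rg_vertices_def by auto
  have fS: "finite S" using mat_fin[OF mN Sp'(1)] .
  have fT: "finite T" using mat_fin[OF mN Tp'(1)] .
  have fJ: "finite J" using J(1) fF finite_subset by blast
  have y0J: "y0 \<notin> J" using y0(3) J(1) by blast
  have y0S: "y0 \<notin> S" using y0(2) S_def by simp
  have y0T: "y0 \<notin> T"
  proof
    assume "y0 \<in> T"
    then have "y0 \<in> Tp" using y0J T_def by blast
    then show False using st1 y0(4) by blast
  qed
  have ySM: "insert y0 S \<in> M" using y0(4) S_def by simp
  have st: "\<forall>w\<in>S - T. insert w T \<notin> M" using st2 SmT T_def by simp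
  have yTM: "insert y0 T \<in> M" using stuck_M[OF mM Sv Tv st ySM y0S y0T] .
  have yJ: "insert y0 J \<in> N" using Lout[OF J(1,2,3) y0(1,3)] .
  have cyJ: "card (insert y0 J) = card I + 1" using fJ y0J J(3) by simp
  have le1: "card (insert y0 J) \<le> card S" using cyJ Sp'(2) cI by simp
  obtain C where C: "insert y0 J \<subseteq> C" "C \<subseteq> insert y0 J \<union> S" "C \<in> N" "card C = card S"
    using Aug[OF mN yJ Sp'(1) le1] by blast
  have Csub: "C \<subseteq> insert y0 S" using C(2) S_def by blast
  obtain x where x: "x \<in> S" "x \<notin> C" "C = insert y0 (S - {x})"
    using exch_form[OF fS y0S _ Csub C(4)] C(1) by blast
  have xSp: "x \<in> Sp" using x(1,2) C(1) S_def by blast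
  have le2: "card (insert y0 J) \<le> card T" using cyJ Tp'(2) cI by simp
  obtain D where D: "insert y0 J \<subseteq> D" "D \<subseteq> insert y0 J \<union> T" "D \<in> N" "card D = card T"
    using Aug[OF mN yJ Tp'(1) le2] by blast
  have Dsub: "D \<subseteq> insert y0 T" using D(2) T_def by blast
  obtain w where w: "w \<in> T" "w \<notin> D" "D = insert y0 (T - {w})"
    using exch_form[OF fT y0T _ Dsub D(4)] D(1) by blast
  have wTp: "w \<in> Tp" using w(1,2) D(1) T_def by blast
  have adjS: "rg_adj M N k S C" using adj_mk[OF mM Sv y0S ySM x(1)] C(3) x(3) by simp
  have adjT: "rg_adj M N k T D" using adj_mk[OF mM Tv y0T yTM w(1)] D(3) w(3) by simp
  have Cv: "C \<in> rg_vertices M N k" using adjS unfolding rg_adj_def by blast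
  have Dv: "D \<in> rg_vertices M N k" using adjT unfolding rg_adj_def by blast
  have JSp: "J \<inter> Sp = {}" using J(1) SpF by blast
  have y0Sp: "y0 \<notin> Sp" using y0(2) by blast
  have "C - D = Sp - {x}"
  proof
    show "C - D \<subseteq> Sp - {x}"
    proof
      fix z assume z: "z \<in> C - D"
      then have "z \<noteq> y0" "z \<in> S" "z \<noteq> x" using x(3) w(3) by auto
      moreover have "z \<notin> T - {w}" using z w(3) by blast
      moreover have "J \<inter> Tp = {}" using J(1) TpF by blast
      ultimately show "z \<in> Sp - {x}" using S_def T_def wTp by blast
    qed
  next
    show "Sp - {x} \<subseteq> C - D"
    proof
      fix z assume z: "z \<in> Sp - {x}"
      then have "z \<in> C" using x(3) S_def by blast
      moreover have "z \<notin> D"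
      proof
        assume "z \<in> D"
        then have "z = y0 \<or> z \<in> T" using w(3) by blast
        then show False using z y0Sp T_def JSp disST by blast
      qed
      ultimately show "z \<in> C - D" by blast
    qed
  qed
  then have "card (C - D) = d'" using cSp xSp fSp by simp
  then have "(rg_adj M N k)\<^sup>*\<^sup>* C D" using IH Cv Dv by blast
  then show ?thesis using rt_step[OF adjS adjT] unfolding S_def T_def by blast
qed

lemma Q: "\<forall>J. (J \<subseteq> F \<and> J \<in> N \<and> card J = card I \<and> J \<union> Sp \<in> M \<and> J \<union> Tp \<in> M \<and>
   (\<exists>y. y \<in> V \<and> y \<notin> J \<union> Sp \<and> insert y (J \<union> Sp) \<in> M \<and> reach V M N F J (J \<union> Sp) L y))
   \<longrightarrow> (rg_adj M N k)\<^sup>*\<^sup>* (J \<union> Sp) (J \<union> Tp)"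
proof (induction L rule: less_induct)
  case (less L)
  show ?case
  proof (intro allI impI)
    fix J assume A: "J \<subseteq> F \<and> J \<in> N \<and> card J = card I \<and> J \<union> Sp \<in> M \<and> J \<union> Tp \<in> M \<and>
      (\<exists>y. y \<in> V \<and> y \<notin> J \<union> Sp \<and> insert y (J \<union> Sp) \<in> M \<and> reach V M N F J (J \<union> Sp) L y)"
    have J: "J \<subseteq> F" "J \<in> N" "card J = card I" "J \<union> Sp \<in> M" "J \<union> Tp \<in> M" using A by auto
    obtain y where y: "y \<in> V" "y \<notin> J \<union> Sp" "insert y (J \<union> Sp) \<in> M" "reach V M N F J (J \<union> Sp) L y"
      using A by blast
    define S where "S = J \<union> Sp"
    define T where "T = J \<union> Tp"
    have Sv: "S \<in> rg_vertices M N k" and Tv: "T \<in> rg_vertices M N k" and SmT: "S - T = Sp" and TmS: "T - S = Tp"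
      using good_vert[OF J] unfolding S_def T_def by auto
    have SP: "S \<in> M" "S \<in> N" and TP: "T \<in> M" "T \<in> N" using Sv Tv unfolding rg_vertices_def by auto
    have fS: "finite S" using mat_fin[OF mM SP(1)] .
    have fJ: "finite J" using J(1) fF finite_subset by blast
    have cST: "card (S - T) = Suc d'" using SmT cSp by simp
    have "(rg_adj M N k)\<^sup>*\<^sup>* S T"
    proof (cases "(\<exists>y\<in>T - S. insert y S \<in> M) \<or> (\<exists>y\<in>S - T. insert y T \<in> M)")
      case True
      then show ?thesis using nonstuck_conn[OF mM mN IH Sv Tv cST] by blast
    next
      case False
      then have st1: "\<forall>y\<in>Tp. insert y (J \<union> Sp) \<notin> M" and st2: "\<forall>y\<in>Sp. insert y (J \<union> Tp) \<notin> M"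
        using SmT TmS unfolding S_def T_def by auto
      have stT: "\<forall>w\<in>S - T. insert w T \<notin> M" using False by blast
      show ?thesis
      proof (cases "\<exists>L' < L. \<exists>y. y \<in> V \<and> y \<notin> S \<and> insert y S \<in> M \<and> reach V M N F J S L' y")
        case True
        then obtain L' where L': "L' < L" "\<exists>y. y \<in> V \<and> y \<notin> S \<and> insert y S \<in> M \<and> reach V M N F J S L' y" by blast
        have "(rg_adj M N k)\<^sup>*\<^sup>* (J \<union> Sp) (J \<union> Tp)" using less.IH[OF L'(1)] J L'(2) unfolding S_def by blast
        then show ?thesis unfolding S_def T_def .
      next
        case False
        then have minimal: "\<forall>L'<L. \<forall>y. y \<in> V \<longrightarrow> y \<notin> S \<longrightarrow> insert y S \<in> M \<longrightarrow> \<not> reach V M N F J S L' y"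
          by blast
        have yS: "y \<notin> S" and yM: "insert y S \<in> M" and yr: "reach V M N F J S L y" using y unfolding S_def by auto
        show ?thesis
        proof (cases L)
          case 0
          then have "y \<notin> F" using yr by simp
          then show ?thesis using sink_conn[OF J st1 st2 y(1,2)] y(3) unfolding S_def T_def by blast
        next
          case (Suc L1)
          have L1L: "L1 < L" using Suc by simp
          have nr: "\<not> reach V M N F J S L1 y" using minimal L1L y(1) yS yM by blast
          have yr2: "reach V M N F J S (Suc L1) y" using yr by (simp only: Suc)
          have "\<exists>x\<in>J. \<exists>y'. insert y (S - {x}) \<in> N \<and> insert y' (S - {x}) \<in> M \<and> reach V M N F J S L1 y'"
            using yr2 nr unfolding reach.simps(2) by blast
          then obtain x1 y1 where x1: "x1 \<in> J" and e: "insert y (S - {x1}) \<in> N" "insert y1 (S - {x1}) \<in> M"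
            "reach V M N F J S L1 y1" by blast
          have yF: "y \<in> F"
          proof (rule ccontr)
            assume "y \<notin> F"
            then have "reach V M N F J S 0 y" using y(1) yS by simp
            then have "reach V M N F J S L1 y" by (rule reach_mono) simp
            then show False using nr by blast
          qed
          have y1o: "y1 \<in> V" "y1 \<notin> S" using reach_out[OF e(3)] by auto
          have y1M: "insert y1 S \<notin> M" using minimal L1L y1o e(3) by blast
          have yy1: "y \<noteq> y1" using y1M yM by blast
          have JS: "J \<subseteq> S" using S_def by blast
          have x1S: "x1 \<in> S" using x1 JS by blast
          have x1T: "x1 \<in> T" using x1 T_def by blast
          have yJ: "y \<notin> J" using yS JS by blast
          have yT: "y \<notin> T"
          proof
            assume "y \<in> T"
            then have "y \<in> Tp" using yJ T_def by blast
            then show False using st1 yM S_def by blast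
          qed
          have yTM: "insert y T \<in> M" using stuck_M[OF mM Sv Tv stT yM yS yT] .
          define J1 where "J1 = insert y (J - {x1})"
          have x1Sp: "x1 \<notin> Sp" using x1 J(1) SpF by blast
          have x1Tp: "x1 \<notin> Tp" using x1 J(1) TpF by blast
          have S1eq: "J1 \<union> Sp = insert y (S - {x1})" using x1Sp unfolding J1_def S_def by blast
          have T1eq: "J1 \<union> Tp = insert y (T - {x1})" using x1Tp unfolding J1_def T_def by blast
          have tr: "reach V M N F J1 (J1 \<union> Sp) L1 y1"
            using transfer[OF mM mN fS JS x1 y(1) yS yM e(1) minimal Suc le_refl e(3) yy1[symmetric]]
            unfolding J1_def S1eq[unfolded J1_def] .
          have J1F: "J1 \<subseteq> F" using J(1) yF unfolding J1_def by blast
          have J1N: "J1 \<in> N" by (rule mat_sub[OF mN e(1)]) (use JS in \<open>auto simp: J1_def\<close>)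
          have cJ1: "card J1 = card I" using card_swap[OF fJ x1 yJ] J(3) unfolding J1_def by simp
          have J1SM: "J1 \<union> Sp \<in> M" unfolding S1eq by (rule mat_sub[OF mM yM]) blast
          have J1TM: "J1 \<union> Tp \<in> M" unfolding T1eq by (rule mat_sub[OF mM yTM]) blast
          have tm: "insert y (insert y1 (S - {x1})) \<in> M"
            using TriM[OF mM fS x1S y1o(2) yS yy1 e(2) y1M yM] .
          have src: "insert y1 (J1 \<union> Sp) \<in> M" unfolding S1eq using tm by (simp add: insert_commute)
          have y1S1: "y1 \<notin> J1 \<union> Sp" unfolding S1eq using y1o(2) yy1 by blast
          have rec: "(rg_adj M N k)\<^sup>*\<^sup>* (J1 \<union> Sp) (J1 \<union> Tp)"
            using less.IH[OF L1L] J1F J1N cJ1 J1SM J1TM y1o(1) y1S1 src tr by blast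
          have v1: "J1 \<union> Tp \<in> rg_vertices M N k" using good_vert(2)[OF J1F J1N cJ1 J1SM J1TM] .
          have nT: "insert y (T - {x1}) \<in> N" using v1 T1eq unfolding rg_vertices_def by simp
          have adjS: "rg_adj M N k S (insert y (S - {x1}))" using adj_mk[OF mM Sv yS yM x1S e(1)] .
          have adjT: "rg_adj M N k T (insert y (T - {x1}))" using adj_mk[OF mM Tv yT yTM x1T nT] .
          show ?thesis using rt_step[OF adjS adjT] rec unfolding S1eq T1eq by blast
        qed
      qed
    qed
    then show "(rg_adj M N k)\<^sup>*\<^sup>* (J \<union> Sp) (J \<union> Tp)" unfolding S_def T_def .
  qed
qed

lemma init:
  assumes H: "\<forall>X. X \<subseteq> V \<and> is_flat V N (V - X) \<and> mrank (restr N (V - X)) \<le> k - 1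
           \<longrightarrow> mrank (restr M X) + mrank (restr N (V - X)) \<ge> k + 1"
  shows "\<exists>L y. y \<in> V \<and> y \<notin> S0 \<and> insert y S0 \<in> M \<and> reach V M N F I S0 L y"
proof (rule ccontr)
  assume nos: "\<not> (\<exists>L y. y \<in> V \<and> y \<notin> S0 \<and> insert y S0 \<in> M \<and> reach V M N F I S0 L y)"
  define Rout where "Rout = {y. \<exists>L. reach V M N F I S0 L y}"
  define RI where "RI = {x \<in> I. \<exists>y L. insert y (S0 - {x}) \<in> M \<and> reach V M N F I S0 L y}"
  define G where "G = {v \<in> V. v \<in> I - RI \<or> insert v (I - RI) \<notin> N}"
  have RII: "RI \<subseteq> I" unfolding RI_def by blast
  have fRI: "finite RI" using RII fI finite_subset by blast
  have IRN: "I - RI \<in> N" by (rule mat_sub[OF mN IN]) blast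
  have GV: "G \<subseteq> V" unfolding G_def by blast
  have g5: "V - G \<subseteq> Sp \<union> RI \<union> Rout"
  proof
    fix v assume v: "v \<in> V - G"
    then have vV: "v \<in> V" and v1: "v \<notin> I - RI" and v2: "insert v (I - RI) \<in> N" unfolding G_def by auto
    show "v \<in> Sp \<union> RI \<union> Rout"
    proof (cases "v \<in> S0")
      case True then show ?thesis using v1 S0eq by blast
    next
      case vS: False
      show ?thesis
      proof (cases "v \<in> F")
        case False
        then have "reach V M N F I S0 0 v" using vV vS by simp
        then show ?thesis unfolding Rout_def by blast
      next
        case vF: True
        have vI: "v \<notin> I" using vS S0eq by blast
        have nI: "insert v I \<notin> N" using vF vI F_def by blast
        have RIne: "RI \<noteq> {}"
        proof
          assume "RI = {}"
          then show False using v2 nI by simp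
        qed
        have cRI: "card RI \<ge> 1" using RIne fRI by (simp add: Suc_le_eq card_gt_0_iff)
        have cIR: "card (I - RI) = card I - card RI" using card_Diff_subset[OF fRI RII] .
        have cRI2: "card RI \<le> card I" using card_mono[OF fI RII] .
        have c: "card (insert v (I - RI)) \<le> card I" using cIR cRI cRI2 v1 fI by simp
        obtain C where C: "insert v (I - RI) \<subseteq> C" "C \<subseteq> insert v (I - RI) \<union> I" "C \<in> N" "card C = card I"
          using Aug[OF mN v2 IN c] by blast
        have Csub: "C \<subseteq> insert v I" using C(2) by blast
        obtain x where x: "x \<in> I" "x \<notin> C" "C = insert v (I - {x})"
          using exch_form[OF fI vI _ Csub C(4)] C(1) by blast
        have xRI: "x \<in> RI" using x(1,2) C(1) by blast
        have CF: "C \<subseteq> F" using x(3) vF IF by blast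
        have CSp: "C \<union> Sp \<in> N" using Lspan[OF CF C(3,4)] S0eq S0p(2) SpF fSp by simp
        have xSp: "x \<notin> Sp" using x(1) disIS by blast
        have eq: "C \<union> Sp = insert v (S0 - {x})" using x(3) S0eq xSp by blast
        obtain y' L where y': "insert y' (S0 - {x}) \<in> M" "reach V M N F I S0 L y'" using xRI unfolding RI_def by blast
        have "reach V M N F I S0 (Suc L) v" unfolding reach.simps(2)
          using vV vS x(1) CSp eq y' by auto
        then show ?thesis unfolding Rout_def by blast
      qed
    qed
  qed
  have disSR: "Sp \<inter> RI = {}" using RII disIS by blast
  have g6: "\<forall>y \<in> Rout. insert y (Sp \<union> RI) \<notin> M"
  proof
    fix y assume "y \<in> Rout"
    then obtain L where yr: "reach V M N F I S0 L y" unfolding Rout_def by blast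
    have yo: "y \<in> V" "y \<notin> S0" using reach_out[OF yr] by auto
    have yM: "insert y S0 \<notin> M" using nos yo yr by blast
    show "insert y (Sp \<union> RI) \<notin> M"
    proof
      assume a: "insert y (Sp \<union> RI) \<in> M"
      show False
      proof (cases "RI = I")
        case True
        then have "Sp \<union> RI = S0" using S0eq by blast
        then show False using a yM by simp
      next
        case False
        then have lt: "card RI < card I" using RII fI by (meson psubsetI psubset_card_mono)
        have ySR: "y \<notin> Sp \<union> RI" using yo(2) S0eq RII by blast
        have c1: "card (insert y (Sp \<union> RI)) = card Sp + card RI + 1"
          using ySR fSp fRI disSR by (simp add: card_Un_disjoint)
        have c2: "card S0 = card I + card Sp" using S0eq disIS fI fSp by (simp add: card_Un_disjoint)
        have le: "card (insert y (Sp \<union> RI)) \<le> card S0" using c1 c2 lt by simp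
        obtain C where C: "insert y (Sp \<union> RI) \<subseteq> C" "C \<subseteq> insert y (Sp \<union> RI) \<union> S0" "C \<in> M" "card C = card S0"
          using Aug[OF mM a S0p(1) le] by blast
        have SRS: "Sp \<union> RI \<subseteq> S0" using S0eq RII by blast
        have Csub: "C \<subseteq> insert y S0" using C(2) SRS by blast
        obtain x where x: "x \<in> S0" "x \<notin> C" "C = insert y (S0 - {x})"
          using exch_form[OF fS0 yo(2) _ Csub C(4)] C(1) by blast
        have xI: "x \<in> I" "x \<notin> RI" using x(1,2) C(1) S0eq by auto
        have "insert y (S0 - {x}) \<in> M" using C(3) x(3) by simp
        then have "x \<in> RI" unfolding RI_def using xI(1) yr by blast
        then show False using xI(2) by blast
      qed
    qed
  qed
  have BM: "Sp \<union> RI \<in> M" by (rule mat_sub[OF mM S0p(1)]) (use S0eq RII in blast)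
  have hM: "\<forall>y\<in>(V - G) - (Sp \<union> RI). insert y (Sp \<union> RI) \<notin> M" using g5 g6 by blast
  have r1: "mrank (restr M (V - G)) \<le> card (Sp \<union> RI)"
  proof (rule mrank_le[OF mM], intro ballI impI)
    fix A assume "A \<in> M" "A \<subseteq> V - G"
    then show "card A \<le> card (Sp \<union> RI)" using Bound[OF mM BM hM] by blast
  qed
  have hN: "\<forall>y\<in>G - (I - RI). insert y (I - RI) \<notin> N" unfolding G_def by blast
  have r2: "mrank (restr N G) \<le> card (I - RI)"
  proof (rule mrank_le[OF mN], intro ballI impI)
    fix A assume "A \<in> N" "A \<subseteq> G"
    then show "card A \<le> card (I - RI)" using Bound[OF mN IRN hN] by blast
  qed
  have flat: "is_flat V N G" unfolding is_flat_def
  proof (intro conjI ballI)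
    show "G \<subseteq> V" using GV .
  next
    fix x assume x: "x \<in> V - G"
    then have x1: "x \<notin> I - RI" and x2: "insert x (I - RI) \<in> N" unfolding G_def by auto
    have IV: "I \<subseteq> V" using IF FV by blast
    have "I - RI \<subseteq> G" unfolding G_def using IV by blast
    then have sub: "insert x (I - RI) \<subseteq> insert x G" by blast
    have "card (insert x (I - RI)) \<le> mrank (restr N (insert x G))" using mrank_ge[OF mN x2 sub] .
    moreover have "card (insert x (I - RI)) = card (I - RI) + 1" using x1 fI by simp
    ultimately show "mrank (restr N (insert x G)) > mrank (restr N G)" using r2 by simp
  qed
  have VG: "V - (V - G) = G" using GV by blast
  have cIR: "card (I - RI) = card I - card RI" using card_Diff_subset[OF fRI RII] .
  have cRI2: "card RI \<le> card I" using card_mono[OF fI RII] .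
  have cSR: "card (Sp \<union> RI) = card Sp + card RI" using card_Un_disjoint[OF fSp fRI disSR] .
  have le: "mrank (restr N (V - (V - G))) \<le> k - 1" using VG r2 cIR cI by simp
  have "mrank (restr M (V - G)) + mrank (restr N (V - (V - G))) \<ge> k + 1"
  proof -
    have "V - G \<subseteq> V" by blast
    moreover have "is_flat V N (V - (V - G))" using flat VG by simp
    ultimately show ?thesis using H[rule_format, of "V - G"] le by blast
  qed
  then show False using r1 r2 VG cIR cRI2 cSR cI cSp by simp
qed

lemma stuck_conn:
  assumes H: "\<forall>X. X \<subseteq> V \<and> is_flat V N (V - X) \<and> mrank (restr N (V - X)) \<le> k - 1
           \<longrightarrow> mrank (restr M X) + mrank (restr N (V - X)) \<ge> k + 1"
  shows "(rg_adj M N k)\<^sup>*\<^sup>* S0 T0"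
proof (cases "(\<exists>y\<in>T0 - S0. insert y S0 \<in> M) \<or> (\<exists>y\<in>S0 - T0. insert y T0 \<in> M)")
  case True
  then show ?thesis using nonstuck_conn[OF mM mN IH S0v T0v cd] by blast
next
  case False
  obtain L y where y: "y \<in> V" "y \<notin> S0" "insert y S0 \<in> M" "reach V M N F I S0 L y"
    using init[OF H] by blast
  have c: "I \<subseteq> F \<and> I \<in> N \<and> card I = card I \<and> I \<union> Sp \<in> M \<and> I \<union> Tp \<in> M \<and>
   (\<exists>y. y \<in> V \<and> y \<notin> I \<union> Sp \<and> insert y (I \<union> Sp) \<in> M \<and> reach V M N F I (I \<union> Sp) L y)"
    using IF IN S0p(1) T0p(1) S0eq T0eq y by auto
  have "(rg_adj M N k)\<^sup>*\<^sup>* (I \<union> Sp) (I \<union> Tp)" using Q c by blast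
  then show ?thesis using S0eq T0eq by simp
qed

end

theorem theorem5p3:
  fixes V :: "'a set" and M N :: "'a set set" and k :: nat
  assumes "matroid V M" and "matroid V N" and "k \<ge> 1"
    and "\<forall>X. X \<subseteq> V \<and> is_flat V N (V - X) \<and> mrank (restr N (V - X)) \<le> k - 1
           \<longrightarrow> mrank (restr M X) + mrank (restr N (V - X)) \<ge> k + 1"
  shows "rg_connected M N k"
proof -
  have main: "\<forall>S T. S \<in> rg_vertices M N k \<longrightarrow> T \<in> rg_vertices M N k \<longrightarrow> card (S - T) = d
     \<longrightarrow> (rg_adj M N k)\<^sup>*\<^sup>* S T" for d
  proof (induction d)
    case 0
    show ?case
    proof (intro allI impI)
      fix S T assume Sv: "S \<in> rg_vertices M N k" and Tv: "T \<in> rg_vertices M N k" and c: "card (S - T) = 0"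
      have S: "S \<in> M" "card S = k" and T: "T \<in> M" "card T = k" using Sv Tv unfolding rg_vertices_def by auto
      have fS: "finite S" using mat_fin[OF assms(1) S(1)] .
      have fT: "finite T" using mat_fin[OF assms(1) T(1)] .
      have "S - T = {}" using c fS by simp
      then have "S \<subseteq> T" by blast
      then have "S = T" using card_subset_eq[OF fT] S(2) T(2) by simp
      then show "(rg_adj M N k)\<^sup>*\<^sup>* S T" by simp
    qed
  next
    case (Suc d')
    show ?case
    proof (intro allI impI)
      fix S T assume Sv: "S \<in> rg_vertices M N k" and Tv: "T \<in> rg_vertices M N k" and c: "card (S - T) = Suc d'"
      show "(rg_adj M N k)\<^sup>*\<^sup>* S T"
        by (rule stuck_conn[OF assms(1,2) Sv Tv c refl refl refl refl Suc.IH assms(4)])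
    qed
  qed
  show ?thesis unfolding rg_connected_def using main by blast
qed

end
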